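(* Consider the graded cluster algebra $\mathcal{A}\big((x_1,x_2,x_3),B,(1,1,2)\big)$ with $B=\begin{pmatrix}0&2&-1\\-2&0&1\\1&-1&0\end{pmatrix}$. It has infinitely many distinct cluster variables of degree $1$ and infinitely many distinct cluster variables of degree $-1$.
   Context: Graded cluster algebras: for a $3\times3$ skew-symmetric integer matrix $B=(b_{ij})$ and $k\in\{1,2,3\}$, $\mu_k(B)=(b'_{ij})$ with $b'_{ij}=-b_{ij}$ if $i=k$ or $j=k$ and $b'_{ij}=b_{ij}+\operatorname{sgn}(b_{ik})\max(b_{ik}b_{kj},0)$ otherwise. A seed $((x_1,x_2,x_3),B)$ mutates in direction $k$ to $(x',\mu_k B)$ with $x'_j=x_j$ ($j\ne k$) and $x'_k=\big(\prod_{b_{ik}>0}x_i^{b_{ik}}+\prod_{b_{ik}<0}x_i^{-b_{ik}}\big)/x_k$. Cluster variables are all entries of clusters reachable by iterated mutation; $\mathcal{A}(x,B,g)$ is the algebra they generate, graded by $\deg x_i=g_i$ where $Bg=0$; under mutation at $k$ the degree vector becomes $g'$ with $g'_j=g_j$ ($j\neq k$), $g'_k=-g_k+\sum_{b_{ik}>0}b_{ik}g_i$, and every cluster variable is homogeneous. *)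

theory Defs
  imports Complex_Main "HOL-Library.FuncSet"
begin

text \<open>Indices 1,2,3 of the paper are 0,1,2 here. A cluster variable, being a
  subtraction-free rational function of the initial variables x_1,x_2,x_3, is represented
  by the function it induces on positive real points p (with p 0, p 1, p 2 > 0);
  two rational functions are equal iff they agree on this open set.\<close>

type_synonym point = "nat \<Rightarrow> real"
type_synonym ratfun = "point \<Rightarrow> real"

definition posD :: "point set" where
  "posD = {p. \<forall>i<3. p i > 0}"

definition mat_mut :: "nat \<Rightarrow> (nat \<Rightarrow> nat \<Rightarrow> int) \<Rightarrow> (nat \<Rightarrow> nat \<Rightarrow> int)" where
  "mat_mut k B = (\<lambda>i j. if i = k \<or> j = k then - B i j
                         else B i j + sgn (B i k) * max (B i k * B k j) 0)"

definition var_mut :: "nat \<Rightarrow> (nat \<Rightarrow> nat \<Rightarrow> int) \<Rightarrow> (nat \<Rightarrow> ratfun) \<Rightarrow> (nat \<Rightarrow> ratfun)" where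
  "var_mut k B x = (\<lambda>j. if j = k then
      (\<lambda>p. ((\<Prod>i\<in>{i. i < 3 \<and> B i k > 0}. x i p ^ nat (B i k))
           + (\<Prod>i\<in>{i. i < 3 \<and> B i k < 0}. x i p ^ nat (- B i k))) / x k p)
      else x j)"

definition deg_mut :: "nat \<Rightarrow> (nat \<Rightarrow> nat \<Rightarrow> int) \<Rightarrow> (nat \<Rightarrow> int) \<Rightarrow> (nat \<Rightarrow> int)" where
  "deg_mut k B g = (\<lambda>j. if j = k then - g k + (\<Sum>i\<in>{i. i < 3 \<and> B i k > 0}. B i k * g i)
                        else g j)"

inductive reachable :: "(nat \<Rightarrow> nat \<Rightarrow> int) \<Rightarrow> (nat \<Rightarrow> int)
    \<Rightarrow> (nat \<Rightarrow> ratfun) \<Rightarrow> (nat \<Rightarrow> nat \<Rightarrow> int) \<Rightarrow> (nat \<Rightarrow> int) \<Rightarrow> bool"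
  for B0 g0 where
  init: "reachable B0 g0 (\<lambda>i p. p i) B0 g0"
| step: "reachable B0 g0 x B g \<Longrightarrow> k < 3 \<Longrightarrow>
         reachable B0 g0 (var_mut k B x) (mat_mut k B) (deg_mut k B g)"

definition cluster_vars_deg :: "(nat \<Rightarrow> nat \<Rightarrow> int) \<Rightarrow> (nat \<Rightarrow> int) \<Rightarrow> int \<Rightarrow> ratfun set" where
  "cluster_vars_deg B0 g0 d =
     {restrict (x k) posD | x B g k. reachable B0 g0 x B g \<and> k < 3 \<and> g k = d}"

definition Bex5 :: "nat \<Rightarrow> nat \<Rightarrow> int" where
  "Bex5 i j = (if i < 3 \<and> j < 3 then [[0, 2, -1], [-2, 0, 1], [1, -1, 0]] ! i ! j else 0)"

definition gex5 :: "nat \<Rightarrow> int" where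
  "gex5 i = (if i < 3 then [1, 1, 2] ! i else 0)"

end

theory Submission
  imports Defs
begin

definition M3 :: "int list list \<Rightarrow> nat \<Rightarrow> nat \<Rightarrow> int" where
  "M3 L i j = (if i < 3 \<and> j < 3 then L ! i ! j else 0)"

definition G3 :: "int list \<Rightarrow> nat \<Rightarrow> int" where
  "G3 l i = (if i < 3 then l ! i else 0)"

definition one :: point where "one = (\<lambda>_. 1)"

lemma lt3: "(i::nat) < 3 \<longleftrightarrow> i = 0 \<or> i = 1 \<or> i = 2" by auto

lemma coll3: "{i::nat. i < 3 \<and> P i} = {i \<in> {0,1,2}. P i}" by auto

lemma prod3: "(\<Prod>i\<in>{i::nat. i < 3 \<and> P i}. f i) =
   (if P 0 then f 0 else 1) * (if P 1 then f 1 else 1) * (if P 2 then (f 2::'a::comm_monoid_mult) else 1)"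
proof -
  have e: "{i::nat. i < 3 \<and> P i} = (if P 0 then {0} else {}) \<union> (if P 1 then {1} else {}) \<union> (if P 2 then {2} else {})"
    by (auto simp: lt3) (metis gr0I)
  show ?thesis unfolding e by (cases "P 0"; cases "P 1"; cases "P 2"; simp add: mult.assoc mult.commute mult.left_commute)
qed

lemma sum3: "(\<Sum>i\<in>{i::nat. i < 3 \<and> P i}. f i) =
   (if P 0 then f 0 else 0) + (if P 1 then f 1 else 0) + (if P 2 then (f 2::'a::comm_monoid_add) else 0)"
proof -
  have e: "{i::nat. i < 3 \<and> P i} = (if P 0 then {0} else {}) \<union> (if P 1 then {1} else {}) \<union> (if P 2 then {2} else {})"
    by (auto simp: lt3) (metis gr0I)
  show ?thesis unfolding e by (cases "P 0"; cases "P 1"; cases "P 2"; simp add: add.assoc add.commute add.left_commute)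
qed

lemma vm_val: "var_mut k B x j p = (if j = k then
   ((if B 0 k > 0 then x 0 p ^ nat (B 0 k) else 1) * (if B 1 k > 0 then x 1 p ^ nat (B 1 k) else 1)
     * (if B 2 k > 0 then x 2 p ^ nat (B 2 k) else 1)
   + (if B 0 k < 0 then x 0 p ^ nat (- B 0 k) else 1) * (if B 1 k < 0 then x 1 p ^ nat (- B 1 k) else 1)
     * (if B 2 k < 0 then x 2 p ^ nat (- B 2 k) else 1)) / x k p else x j p)"
  unfolding var_mut_def by (simp add: prod3)

lemma dm_eq: "deg_mut k B g = (\<lambda>j. if j = k then - g k +
   ((if B 0 k > 0 then B 0 k * g 0 else 0) + (if B 1 k > 0 then B 1 k * g 1 else 0)
    + (if B 2 k > 0 then B 2 k * g 2 else 0)) else g j)"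
  unfolding deg_mut_def by (simp only: sum3)

lemma Bex5_M3: "Bex5 = M3 [[0, 2, -1], [-2, 0, 1], [1, -1, 0]]"
  by (simp add: fun_eq_iff Bex5_def M3_def)

lemma gex5_G3: "gex5 = G3 [1, 1, 2]"
  by (simp add: fun_eq_iff gex5_def G3_def)

lemma mm_tac: "k < 3 \<Longrightarrow>
  (\<And>i j. i < 3 \<Longrightarrow> j < 3 \<Longrightarrow> mat_mut k (M3 L) i j = M3 L' i j) \<Longrightarrow> mat_mut k (M3 L) = M3 L'"
  by (auto simp: fun_eq_iff mat_mut_def M3_def)

lemma gm_tac: "(\<And>i. i < 3 \<Longrightarrow> deg_mut k B (G3 l) i = G3 l' i) \<Longrightarrow> k < 3 \<Longrightarrow> deg_mut k B (G3 l) = G3 l'"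
  by (auto simp: fun_eq_iff deg_mut_def G3_def)

lemma mm_tac2: "k < 3 \<Longrightarrow>
  (\<forall>i\<in>{0,1,2}. \<forall>j\<in>{0,1,2}. mat_mut k (M3 L) i j = M3 L' i j) \<Longrightarrow> mat_mut k (M3 L) = M3 L'"
  by (rule mm_tac) (auto simp: lt3)

lemma gm_tac2: "k < 3 \<Longrightarrow> (\<forall>i\<in>{0,1,2}. deg_mut k B (G3 l) i = G3 l' i) \<Longrightarrow> deg_mut k B (G3 l) = G3 l'"
  by (rule gm_tac) (auto simp: lt3)

lemma mm1: "mat_mut 0 (M3 [[0, 2, -1], [-2, 0, 1], [1, -1, 0]]) = M3 [[0, -2, 1], [2, 0, -1], [-1, 1, 0]]"
  by (rule mm_tac2) (simp_all add: mat_mut_def M3_def)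
lemma mm2: "mat_mut 1 (M3 [[0, -2, 1], [2, 0, -1], [-1, 1, 0]]) = M3 [[0, 2, -1], [-2, 0, 1], [1, -1, 0]]"
  by (rule mm_tac2) (simp_all add: mat_mut_def M3_def)
lemma mm3: "mat_mut 2 (M3 [[0, 2, -1], [-2, 0, 1], [1, -1, 0]]) = M3 [[0,1,1],[-1,0,-1],[-1,1,0]]"
  by (rule mm_tac2) (simp_all add: mat_mut_def M3_def)
lemma mm4: "mat_mut 0 (M3 [[0,1,1],[-1,0,-1],[-1,1,0]]) = M3 [[0,-1,-1],[1,0,-1],[1,1,0]]"
  by (rule mm_tac2) (simp_all add: mat_mut_def M3_def)
lemma mm5: "mat_mut 1 (M3 [[0,-1,-1],[1,0,-1],[1,1,0]]) = M3 [[0,1,-2],[-1,0,1],[2,-1,0]]"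
  by (rule mm_tac2) (simp_all add: mat_mut_def M3_def)
lemma mm6: "mat_mut 0 (M3 [[0,1,-2],[-1,0,1],[2,-1,0]]) = M3 [[0,-1,2],[1,0,-1],[-2,1,0]]"
  by (rule mm_tac2) (simp_all add: mat_mut_def M3_def)
lemma mm7: "mat_mut 2 (M3 [[0,-1,2],[1,0,-1],[-2,1,0]]) = M3 [[0,1,-2],[-1,0,1],[2,-1,0]]"
  by (rule mm_tac2) (simp_all add: mat_mut_def M3_def)

lemma gm1: "deg_mut 0 (M3 [[0, 2, -1], [-2, 0, 1], [1, -1, 0]]) (G3 [1,1,2]) = G3 [1,1,2]"
  by (rule gm_tac2) (simp_all add: dm_eq M3_def G3_def)
lemma gm2: "deg_mut 1 (M3 [[0, -2, 1], [2, 0, -1], [-1, 1, 0]]) (G3 [1,1,2]) = G3 [1,1,2]"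
  by (rule gm_tac2) (simp_all add: dm_eq M3_def G3_def)
lemma gm3: "deg_mut 2 (M3 [[0, 2, -1], [-2, 0, 1], [1, -1, 0]]) (G3 [1,1,2]) = G3 [1,1,-1]"
  by (rule gm_tac2) (simp_all add: dm_eq M3_def G3_def)
lemma gm4: "deg_mut 0 (M3 [[0,1,1],[-1,0,-1],[-1,1,0]]) (G3 [1,1,-1]) = G3 [-1,1,-1]"
  by (rule gm_tac2) (simp_all add: dm_eq M3_def G3_def)
lemma gm5: "deg_mut 1 (M3 [[0,-1,-1],[1,0,-1],[1,1,0]]) (G3 [-1,1,-1]) = G3 [-1,-2,-1]"
  by (rule gm_tac2) (simp_all add: dm_eq M3_def G3_def)
lemma gm6: "deg_mut 0 (M3 [[0,1,-2],[-1,0,1],[2,-1,0]]) (G3 [-1,-2,-1]) = G3 [-1,-2,-1]"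
  by (rule gm_tac2) (simp_all add: dm_eq M3_def G3_def)
lemma gm7: "deg_mut 2 (M3 [[0,-1,2],[1,0,-1],[-2,1,0]]) (G3 [-1,-2,-1]) = G3 [-1,-2,-1]"
  by (rule gm_tac2) (simp_all add: dm_eq M3_def G3_def)

lemma ineq:
  fixes a b c :: real
  assumes "1 \<le> a" "a + 1 \<le> b" "0 \<le> c"
  shows "b + 1 \<le> (c + b ^ 2) / a"
proof -
  have "(b + 1) * a \<le> (b + 1) * (b - 1)" using assms by (intro mult_left_mono) auto
  also have "\<dots> \<le> c + b ^ 2" using assms by (simp add: power2_eq_square algebra_simps)
  finally show ?thesis using assms by (simp add: field_simps)
qed

abbreviation "R \<equiv> reachable Bex5 gex5"

lemma step1:
  assumes "R x Bex5 gex5"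
  shows "\<exists>z. R z Bex5 gex5 \<and> z 2 one = x 2 one \<and> z 0 one = (x 2 one + x 1 one ^ 2) / x 0 one
     \<and> z 1 one = (x 2 one + ((x 2 one + x 1 one ^ 2) / x 0 one) ^ 2) / x 1 one"
proof -
  let ?y = "var_mut 0 Bex5 x"
  let ?z = "var_mut 1 (M3 [[0, -2, 1], [2, 0, -1], [-1, 1, 0]]) ?y"
  have "R ?y (mat_mut 0 Bex5) (deg_mut 0 Bex5 gex5)" using assms by (rule reachable.step) simp
  hence 1: "R ?y (M3 [[0, -2, 1], [2, 0, -1], [-1, 1, 0]]) gex5"
    by (simp only: Bex5_M3 gex5_G3 mm1 gm1)
  have "R ?z (mat_mut 1 (M3 [[0, -2, 1], [2, 0, -1], [-1, 1, 0]])) (deg_mut 1 (M3 [[0, -2, 1], [2, 0, -1], [-1, 1, 0]]) gex5)"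
    using 1 by (rule reachable.step) simp
  hence "R ?z Bex5 gex5" by (simp only: Bex5_M3 gex5_G3 mm2 gm2)
  moreover have "?z 2 one = x 2 one" by (simp add: vm_val)
  moreover have "?z 0 one = (x 2 one + x 1 one ^ 2) / x 0 one" by (simp add: vm_val Bex5_def M3_def)
  moreover have "?z 1 one = (x 2 one + ((x 2 one + x 1 one ^ 2) / x 0 one) ^ 2) / x 1 one"
    by (simp add: vm_val Bex5_def M3_def)
  ultimately show ?thesis by blast
qed

lemma fam1: "\<exists>x. R x Bex5 gex5 \<and> 0 \<le> x 2 one \<and> 1 \<le> x 0 one \<and> x 0 one + 1 \<le> x 1 one \<and> real n \<le> x 1 one"
proof (induction n)
  case 0
  obtain z where z: "R z Bex5 gex5" "z 2 one = 1" "z 0 one = 2" "z 1 one = 5"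
    using step1[OF reachable.init] by (auto simp: one_def)
  then show ?case by (intro exI[of _ z]) auto
next
  case (Suc n)
  then obtain x where x: "R x Bex5 gex5" "0 \<le> x 2 one" "1 \<le> x 0 one" "x 0 one + 1 \<le> x 1 one" "real n \<le> x 1 one"
    by blast
  obtain z where z: "R z Bex5 gex5" "z 2 one = x 2 one" "z 0 one = (x 2 one + x 1 one ^ 2) / x 0 one"
     "z 1 one = (x 2 one + ((x 2 one + x 1 one ^ 2) / x 0 one) ^ 2) / x 1 one"
    using step1[OF x(1)] by blast
  have a: "x 1 one + 1 \<le> z 0 one" unfolding z(3) by (rule ineq) (use x in auto)
  have b: "z 0 one + 1 \<le> z 1 one" unfolding z(4) z(3)[symmetric]
    by (rule ineq) (use x a in auto)
  have c1: "0 \<le> z 2 one" using z(2) x(2) by simp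
  have c2: "1 \<le> z 0 one" using a x by linarith
  have c3: "real (Suc n) \<le> z 1 one" proof -
    have "real (Suc n) = real n + 1" by simp
    then show ?thesis using a b x(5) by linarith
  qed
  show ?case using z(1) c1 c2 c3 b by blast
qed


abbreviation "C1 \<equiv> M3 [[0,1,-2],[-1,0,1],[2,-1,0]]"
abbreviation "C2 \<equiv> M3 [[0,-1,2],[1,0,-1],[-2,1,0]]"
abbreviation "H \<equiv> G3 [-1,-2,-1]"

lemma step2:
  assumes "R x C1 H"
  shows "\<exists>z. R z C1 H \<and> z 1 one = x 1 one \<and> z 0 one = (x 1 one + x 2 one ^ 2) / x 0 one
     \<and> z 2 one = (x 1 one + ((x 1 one + x 2 one ^ 2) / x 0 one) ^ 2) / x 2 one"
proof -
  let ?y = "var_mut 0 C1 x"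
  let ?z = "var_mut 2 C2 ?y"
  have "R ?y (mat_mut 0 C1) (deg_mut 0 C1 H)" using assms by (rule reachable.step) simp
  hence 1: "R ?y C2 H"
    by (simp only: mm6 gm6)
  have "R ?z (mat_mut 2 C2) (deg_mut 2 C2 H)"
    using 1 by (rule reachable.step) simp
  hence "R ?z C1 H" by (simp only: mm7 gm7)
  moreover have "?z 1 one = x 1 one" by (simp add: vm_val)
  moreover have "?z 0 one = (x 1 one + x 2 one ^ 2) / x 0 one" by (simp add: vm_val M3_def add.commute)
  moreover have "?z 2 one = (x 1 one + ((x 1 one + x 2 one ^ 2) / x 0 one) ^ 2) / x 2 one"
    by (simp add: vm_val M3_def add.commute)
  ultimately show ?thesis by blast
qed

lemma base2: "\<exists>x. R x C1 H \<and> x 0 one = 3 \<and> x 1 one = 5 \<and> x 2 one = 2"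
proof -
  let ?x0 = "\<lambda>i p. p i :: real"
  let ?x1 = "var_mut 2 Bex5 ?x0"
  let ?x2 = "var_mut 0 (M3 [[0,1,1],[-1,0,-1],[-1,1,0]]) ?x1"
  let ?x3 = "var_mut 1 (M3 [[0,-1,-1],[1,0,-1],[1,1,0]]) ?x2"
  have "R ?x1 (mat_mut 2 Bex5) (deg_mut 2 Bex5 gex5)" by (rule reachable.step[OF reachable.init]) simp
  hence "R ?x1 (M3 [[0,1,1],[-1,0,-1],[-1,1,0]]) (G3 [1,1,-1])" by (simp only: Bex5_M3 gex5_G3 mm3 gm3)
  hence "R ?x2 (mat_mut 0 (M3 [[0,1,1],[-1,0,-1],[-1,1,0]])) (deg_mut 0 (M3 [[0,1,1],[-1,0,-1],[-1,1,0]]) (G3 [1,1,-1]))"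
    by (rule reachable.step) simp
  hence "R ?x2 (M3 [[0,-1,-1],[1,0,-1],[1,1,0]]) (G3 [-1,1,-1])" by (simp only: mm4 gm4)
  hence "R ?x3 (mat_mut 1 (M3 [[0,-1,-1],[1,0,-1],[1,1,0]])) (deg_mut 1 (M3 [[0,-1,-1],[1,0,-1],[1,1,0]]) (G3 [-1,1,-1]))"
    by (rule reachable.step) simp
  hence "R ?x3 C1 H" by (simp only: mm5 gm5)
  moreover have "?x3 0 one = 3" by (simp add: vm_val M3_def Bex5_def one_def)
  moreover have "?x3 1 one = 5" by (simp add: vm_val M3_def Bex5_def one_def)
  moreover have "?x3 2 one = 2" by (simp add: vm_val M3_def Bex5_def one_def)
  ultimately show ?thesis by blast
qed

lemma fam2: "\<exists>x. R x C1 H \<and> 0 \<le> x 1 one \<and> 1 \<le> x 0 one \<and> x 0 one + 1 \<le> x 2 one \<and> real n \<le> x 2 one"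
proof (induction n)
  case 0
  obtain y where y: "R y C1 H" "y 0 one = 3" "y 1 one = 5" "y 2 one = 2"
    using base2 by blast
  obtain z where z: "R z C1 H" "z 1 one = 5" "z 0 one = 3" "z 2 one = 7"
    using step2[OF y(1)] y(2-4) by auto
  then show ?case by (intro exI[of _ z]) auto
next
  case (Suc n)
  then obtain x where x: "R x C1 H" "0 \<le> x 1 one" "1 \<le> x 0 one" "x 0 one + 1 \<le> x 2 one" "real n \<le> x 2 one"
    by blast
  obtain z where z: "R z C1 H" "z 1 one = x 1 one" "z 0 one = (x 1 one + x 2 one ^ 2) / x 0 one"
     "z 2 one = (x 1 one + ((x 1 one + x 2 one ^ 2) / x 0 one) ^ 2) / x 2 one"
    using step2[OF x(1)] by blast
  have a: "x 2 one + 1 \<le> z 0 one" unfolding z(3) by (rule ineq) (use x in auto)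
  have b: "z 0 one + 1 \<le> z 2 one" unfolding z(4) z(3)[symmetric]
    by (rule ineq) (use x a in auto)
  have c1: "0 \<le> z 1 one" using z(2) x(2) by simp
  have c2: "1 \<le> z 0 one" using a x by linarith
  have c3: "real (Suc n) \<le> z 2 one"
  proof -
    have "real (Suc n) = real n + 1" by simp
    then show ?thesis using a b x(5) by linarith
  qed
  show ?case using z(1) c1 c2 c3 b by blast
qed

lemma one_posD: "one \<in> posD" by (simp add: one_def posD_def)

lemma infinite_crit:
  assumes "\<And>n::nat. \<exists>f\<in>S. real n \<le> f one"
  shows "infinite (S :: ratfun set)"
proof
  assume "finite S"
  hence "bdd_above ((\<lambda>f. f one) ` S)" by simp
  then obtain M where M: "\<And>f. f \<in> S \<Longrightarrow> f one \<le> M" by (auto simp: bdd_above_def)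
  obtain n :: nat where "M < real n" using reals_Archimedean2 by blast
  with assms[of n] M show False by force
qed

theorem mainTheorem5:
  shows "infinite (cluster_vars_deg Bex5 gex5 1) \<and> infinite (cluster_vars_deg Bex5 gex5 (-1))"
proof
  show "infinite (cluster_vars_deg Bex5 gex5 1)"
  proof (rule infinite_crit)
    fix n
    obtain x where x: "R x Bex5 gex5" "real n \<le> x 1 one" using fam1[of n] by blast
    have "restrict (x 1) posD \<in> cluster_vars_deg Bex5 gex5 1"
      unfolding cluster_vars_deg_def
      by (rule CollectI, rule exI[of _ x], rule exI[of _ Bex5], rule exI[of _ gex5], rule exI[of _ 1])
         (simp add: x(1) gex5_def)
    moreover have "restrict (x 1) posD one = x 1 one" using one_posD by simp
    ultimately show "\<exists>f\<in>cluster_vars_deg Bex5 gex5 1. real n \<le> f one" using x(2) by metis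
  qed
  show "infinite (cluster_vars_deg Bex5 gex5 (-1))"
  proof (rule infinite_crit)
    fix n
    obtain x where x: "R x C1 H" "real n \<le> x 2 one" using fam2[of n] by blast
    have "restrict (x 2) posD \<in> cluster_vars_deg Bex5 gex5 (-1)"
      unfolding cluster_vars_deg_def
      by (rule CollectI, rule exI[of _ x], rule exI[of _ C1], rule exI[of _ H], rule exI[of _ 2])
         (simp add: x(1) G3_def)
    moreover have "restrict (x 2) posD one = x 2 one" using one_posD by simp
    ultimately show "\<exists>f\<in>cluster_vars_deg Bex5 gex5 (-1). real n \<le> f one" using x(2) by metis
  qed
qed

end
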